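(* Let $\alpha\in[0,1)$, let $n\geq f(\alpha)$, and let $s$ be an integer with $2\leq s\leq\frac{n-1}{3}$. Then $\rho_{\alpha}\big(K_s\vee(K_{n-3s+1}\cup (2s-1)K_1)\big)<\eta(n)$.
   Context: For a graph $G$, $A_{\alpha}(G)=\alpha D(G)+(1-\alpha)A(G)$ where $D(G)$ is the diagonal degree matrix and $A(G)$ the adjacency matrix, and $\rho_{\alpha}(G)$ is the largest eigenvalue of $A_{\alpha}(G)$. $\vee$ denotes join, $\cup$ disjoint union, $K_m$ the complete graph on $m$ vertices, $tK_1$ the edgeless graph on $t$ vertices. Define $f(\alpha)=14$ if $\alpha\in[0,\frac12]$, $f(\alpha)=17$ if $\alpha\in(\frac12,\frac23]$, $f(\alpha)=20$ if $\alpha\in(\frac23,\frac34]$, and $f(\alpha)=\frac{5}{1-\alpha}+1$ if $\alpha\in(\frac34,1)$. $\eta(n)$ is the largest root of $x^{3}-((\alpha+1)n+\alpha-4)x^{2}+(\alpha n^{2}+(\alpha^{2}-2\alpha-1)n-2\alpha+1)x-\alpha^{2}n^{2}+(5\alpha^{2}-3\alpha+2)n-10\alpha^{2}+15\alpha-8=0$. *)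

theory Defs
  imports Complex_Main
begin

text \<open>A finite simple graph on the vertex set {0..<n}: a pair (n, E) where
  E is the adjacency relation (symmetric, irreflexive by construction below).\<close>
type_synonym graph = "nat \<times> (nat \<Rightarrow> nat \<Rightarrow> bool)"

definition gorder :: "graph \<Rightarrow> nat" where "gorder G = fst G"
definition gadj :: "graph \<Rightarrow> nat \<Rightarrow> nat \<Rightarrow> bool" where "gadj G = snd G"

definition complete :: "nat \<Rightarrow> graph" where
  "complete m = (m, \<lambda>i j. i < m \<and> j < m \<and> i \<noteq> j)"

definition edgeless :: "nat \<Rightarrow> graph" where
  "edgeless t = (t, \<lambda>i j. False)"

definition gunion :: "graph \<Rightarrow> graph \<Rightarrow> graph" where
  "gunion G H = (gorder G + gorder H,
     \<lambda>i j. (i < gorder G \<and> j < gorder G \<and> gadj G i j) \<or>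
           (gorder G \<le> i \<and> gorder G \<le> j \<and> i < gorder G + gorder H \<and> j < gorder G + gorder H
             \<and> gadj H (i - gorder G) (j - gorder G)))"

definition gjoin :: "graph \<Rightarrow> graph \<Rightarrow> graph" where
  "gjoin G H = (gorder G + gorder H,
     \<lambda>i j. gadj (gunion G H) i j \<or>
           (i < gorder G \<and> gorder G \<le> j \<and> j < gorder G + gorder H) \<or>
           (j < gorder G \<and> gorder G \<le> i \<and> i < gorder G + gorder H))"

definition degree :: "graph \<Rightarrow> nat \<Rightarrow> nat" where
  "degree G i = card {j. j < gorder G \<and> gadj G i j}"

definition A_alpha :: "real \<Rightarrow> graph \<Rightarrow> nat \<Rightarrow> nat \<Rightarrow> real" where
  "A_alpha \<alpha> G i j = (if i = j then \<alpha> * real (degree G i) else 0)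
                      + (1 - \<alpha>) * (if gadj G i j then 1 else 0)"

definition is_eigenvalue :: "nat \<Rightarrow> (nat \<Rightarrow> nat \<Rightarrow> real) \<Rightarrow> real \<Rightarrow> bool" where
  "is_eigenvalue n M \<mu> \<longleftrightarrow> (\<exists>v::nat \<Rightarrow> real. (\<exists>i<n. v i \<noteq> 0) \<and>
      (\<forall>i<n. (\<Sum>j<n. M i j * v j) = \<mu> * v i))"

text \<open>Largest eigenvalue of A_alpha(G) (A_alpha(G) is real symmetric, so all eigenvalues are real).\<close>
definition rho_alpha :: "real \<Rightarrow> graph \<Rightarrow> real" where
  "rho_alpha \<alpha> G = Max {\<mu>. is_eigenvalue (gorder G) (A_alpha \<alpha> G) \<mu>}"

definition f_bound :: "real \<Rightarrow> real" where
  "f_bound \<alpha> = (if \<alpha> \<le> 1/2 then 14 else if \<alpha> \<le> 2/3 then 17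
                 else if \<alpha> \<le> 3/4 then 20 else 5 / (1 - \<alpha>) + 1)"

definition eta_poly :: "real \<Rightarrow> real \<Rightarrow> real \<Rightarrow> real" where
  "eta_poly \<alpha> n x = x^3 - ((\<alpha> + 1) * n + \<alpha> - 4) * x^2
     + (\<alpha> * n^2 + (\<alpha>^2 - 2*\<alpha> - 1) * n - 2*\<alpha> + 1) * x
     - \<alpha>^2 * n^2 + (5*\<alpha>^2 - 3*\<alpha> + 2) * n - 10*\<alpha>^2 + 15*\<alpha> - 8"

definition eta :: "real \<Rightarrow> real \<Rightarrow> real" where
  "eta \<alpha> n = Max {x. eta_poly \<alpha> n x = 0}"

end

theory Submission
  imports Defs "HOL-Computational_Algebra.Polynomial"
begin

lemma Qpos:
  fixes c N S k :: real
  assumes c: "0 < c" and S: "S = 2 \<or> S = 3 \<or> S \<ge> 4" and N1: "3*S + 1 \<le> N"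
    and N2: "14 \<le> N" and cN: "5 \<le> c*N" and k: "k = N - 3*S - 1"
  shows "0 < c*((2*S-3)*k^2 + (8*S^2-16*S+3)*k + 8*S^3-24*S^2+12*S+6)
             + c^2*(4*S*(S-1)*k + 4*S*(S^2-S-1)) - 2*(2*S-3)*(N-S-3)"
proof -
  define B where "B = (2*S-3)*k^2 + (8*S^2-16*S+3)*k + 8*S^3-24*S^2+12*S+6"
  define R where "R = 2*(2*S-3)*(N-S-3)"
  have S2: "S \<ge> 2" using S by auto
  have Npos: "N > 0" using N2 by simp
  have k0: "k \<ge> 0" using k N1 by simp
  have NN: "N = k + 3*S + 1" using k by simp
  have Rnn: "R \<ge> 0" unfolding R_def using S2 N1 by simp
  have D: "4*S*(S-1)*k + 4*S*(S^2-S-1) \<ge> 0"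
  proof -
    have "(S-2)*(S+1) \<ge> 0" using S2 by simp
    hence "S^2 - S - 1 \<ge> 1" by (simp add: power2_eq_square algebra_simps)
    hence "4*S*(S^2-S-1) \<ge> 0" using S2 by simp
    moreover have "4*S*(S-1)*k \<ge> 0" using S2 k0 by simp
    ultimately show ?thesis by linarith
  qed
  have diff: "R*N < 5*B"
  proof -
    consider "S = 2" | "S = 3" | "S \<ge> 4" using S by auto
    then show ?thesis
    proof cases
      case 1
      define u where "u = k - 7"
      have u0: "u \<ge> 0" using k N2 1 unfolding u_def by simp
      have "5*B - R*N = 3*u^2+39*u+88"
        unfolding B_def R_def u_def by (simp only: NN 1; simp add: power2_eq_square power3_eq_cube algebra_simps)
      moreover have "3*u^2+39*u \<ge> 0" by (intro add_nonneg_nonneg mult_nonneg_nonneg) (use u0 in auto)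
      hence "3*u^2+39*u+88 > 0" by linarith
      ultimately show ?thesis by linarith
    next
      case 2
      define u where "u = k - 4"
      have u0: "u \<ge> 0" using k N2 2 unfolding u_def by simp
      have "5*B - R*N = 9*u^2+123*u+318"
        unfolding B_def R_def u_def by (simp only: NN 2; simp add: power2_eq_square power3_eq_cube algebra_simps)
      moreover have "9*u^2+123*u \<ge> 0" by (intro add_nonneg_nonneg mult_nonneg_nonneg) (use u0 in auto)
      hence "9*u^2+123*u+318 > 0" by linarith
      ultimately show ?thesis by linarith
    next
      case 3
      define u where "u = S - 4"
      have u0: "u \<ge> 0" using 3 unfolding u_def by simp
      have "5*B - R*N = 6*k^2*u + 15*k^2 + 20*k*u^2 + 114*k*u + 145*k + 16*u^3 + 124*u^2 + 268*u + 130"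
        unfolding B_def R_def u_def by (simp only: NN; simp add: power2_eq_square power3_eq_cube algebra_simps)
      moreover have "6*k^2*u + 15*k^2 + 20*k*u^2 + 114*k*u + 145*k + 16*u^3 + 124*u^2 + 268*u \<ge> 0"
        by (intro add_nonneg_nonneg mult_nonneg_nonneg) (use u0 k0 in auto)
      hence "6*k^2*u + 15*k^2 + 20*k*u^2 + 114*k*u + 145*k + 16*u^3 + 124*u^2 + 268*u + 130 > 0" by linarith
      ultimately show ?thesis by linarith
    qed
  qed
  have Bpos: "B > 0"
    using diff Rnn Npos by (smt (verit) mult_nonneg_nonneg)
  have "5*B \<le> c*N*B" using cN Bpos by (simp add: mult_right_mono)
  hence "R*N < (c*B)*N" using diff by (simp add: algebra_simps)
  hence "R < c*B" using Npos by simp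
  moreover have "c^2*(4*S*(S-1)*k + 4*S*(S^2-S-1)) \<ge> 0" using D by simp
  ultimately show ?thesis unfolding B_def R_def by linarith
qed


definition Eadj :: "nat \<Rightarrow> nat \<Rightarrow> nat \<Rightarrow> nat \<Rightarrow> bool" where
  "Eadj s p i j \<longleftrightarrow> (i \<noteq> j \<and> (i < s \<or> j < s \<or> (i < p \<and> j < p)))"

lemma nbr_set:
  assumes "s \<le> p" "p \<le> n" "i < n"
  shows "{j. j < n \<and> Eadj s p i j} = (if i < s then {..<n} - {i} else if i < p then {..<p} - {i} else {..<s})"
  using assms by (auto simp: Eadj_def)

lemma deg_eq:
  assumes ord: "gorder G = n" and adj: "\<And>i j. i<n \<Longrightarrow> j<n \<Longrightarrow> gadj G i j \<longleftrightarrow> Eadj s p i j"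
    and sp: "s \<le> p" "p \<le> n" and i: "i < n"
  shows "Defs.degree G i = (if i < s then n - 1 else if i < p then p - 1 else s)"
proof -
  have "Defs.degree G i = card {j. j < n \<and> Eadj s p i j}"
  proof -
    have "{j. j < gorder G \<and> gadj G i j} = {j. j < n \<and> Eadj s p i j}" using adj i ord by auto
    thus ?thesis unfolding Defs.degree_def by simp
  qed
  also have "\<dots> = (if i < s then n - 1 else if i < p then p - 1 else s)"
    using sp i by (simp add: nbr_set card_Diff_singleton)
  finally show ?thesis .
qed

lemma nbr_sum:
  fixes v :: "nat \<Rightarrow> real"
  assumes sp: "s \<le> p" "p \<le> n" and i: "i < n"
  shows "(\<Sum>j<n. if Eadj s p i j then v j else 0) =
     (if i < s then (\<Sum>j<n. v j) - v i else if i < p then (\<Sum>j<p. v j) - v i else (\<Sum>j<s. v j))"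
proof -
  have "(\<Sum>j<n. if Eadj s p i j then v j else 0) = sum v {j \<in> {..<n}. Eadj s p i j}"
    by (rule sum.inter_filter[symmetric]) simp
  also have "{j \<in> {..<n}. Eadj s p i j} = {j. j < n \<and> Eadj s p i j}" by auto
  finally show ?thesis using sp i by (simp add: nbr_set sum_diff1)
qed

lemma row_eq:
  fixes v :: "nat \<Rightarrow> real"
  assumes ord: "gorder G = n" and adj: "\<And>i j. i<n \<Longrightarrow> j<n \<Longrightarrow> gadj G i j \<longleftrightarrow> Eadj s p i j"
    and sp: "s \<le> p" "p \<le> n" and i: "i < n"
  shows "(\<Sum>j<n. A_alpha \<alpha> G i j * v j) =
     (if i < s then \<alpha> * (real n - 1) * v i + (1-\<alpha>) * ((\<Sum>j<n. v j) - v i)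
      else if i < p then \<alpha> * (real p - 1) * v i + (1-\<alpha>) * ((\<Sum>j<p. v j) - v i)
      else \<alpha> * real s * v i + (1-\<alpha>) * (\<Sum>j<s. v j))"
proof -
  have "(\<Sum>j<n. A_alpha \<alpha> G i j * v j) =
        (\<Sum>j<n. (if i = j then \<alpha> * real (Defs.degree G i) * v j else 0) + (1-\<alpha>) * (if Eadj s p i j then v j else 0))"
    by (rule sum.cong) (simp_all add: A_alpha_def adj i distrib_right)
  also have "\<dots> = \<alpha> * real (Defs.degree G i) * v i + (1-\<alpha>) * (\<Sum>j<n. if Eadj s p i j then v j else 0)"
    by (simp add: sum.distrib sum_distrib_left[symmetric] i)
  finally show ?thesis
    using sp i deg_eq[OF ord adj sp i] nbr_sum[OF sp i, of v]
    by (auto simp: of_nat_diff)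
qed


definition chi :: "real \<Rightarrow> real \<Rightarrow> real \<Rightarrow> real \<Rightarrow> real \<Rightarrow> real" where
  "chi a N S P x = (x - (a*(N-1) + (1-a)*(S-1))) * (x - (a*(P-1) + (1-a)*(P-S-1))) * (x - a*S)
     - (1-a)^2*S*(P-S)*(x - a*S) - (1-a)^2*S*(N-P)*(x - (a*(P-1) + (1-a)*(P-S-1)))"

lemma cubic_kill:
  fixes p q r k m t X Y Z :: real
  assumes "p*X = k*(Y+Z)" "q*Y = m*X" "r*Z = t*X"
  shows "(p*q*r - k*m*r - k*t*q) * X = 0 \<and> (p*q*r - k*m*r - k*t*q) * Y = 0 \<and> (p*q*r - k*m*r - k*t*q) * Z = 0"
  using assms by algebra

lemma eig_classify:
  fixes v :: "nat \<Rightarrow> real"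
  assumes ord: "gorder G = n" and adj: "\<And>i j. i<n \<Longrightarrow> j<n \<Longrightarrow> gadj G i j \<longleftrightarrow> Eadj s p i j"
    and sp: "s \<le> p" "p \<le> n"
    and ev: "\<forall>i<n. (\<Sum>j<n. A_alpha \<alpha> G i j * v j) = \<mu> * v i" and nz: "\<exists>i<n. v i \<noteq> 0"
  shows "\<mu> = \<alpha>*(real n - 1) - (1-\<alpha>) \<or> \<mu> = \<alpha>*(real p - 1) - (1-\<alpha>) \<or> \<mu> = \<alpha> * real s
         \<or> chi \<alpha> (real n) (real s) (real p) \<mu> = 0"
proof -
  define c where "c = 1 - \<alpha>"
  define TX where "TX = (\<Sum>j<s. v j)"
  define TP where "TP = (\<Sum>j<p. v j)"
  define T where "T = (\<Sum>j<n. v j)"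
  have r: "\<mu> * v i = (if i < s then \<alpha> * (real n - 1) * v i + c * (T - v i)
      else if i < p then \<alpha> * (real p - 1) * v i + c * (TP - v i)
      else \<alpha> * real s * v i + c * TX)" if "i < n" for i
    using ev row_eq[OF ord adj sp that, of \<alpha> v] that unfolding c_def T_def TP_def TX_def by simp
  have e1: "\<mu> * TX = \<alpha> * (real n - 1) * TX + c * (real s * T - TX)"
  proof -
    have "\<mu> * TX = (\<Sum>i<s. \<mu> * v i)" by (simp add: TX_def sum_distrib_left)
    also have "\<dots> = (\<Sum>i<s. \<alpha> * (real n - 1) * v i + c * T - c * v i)"
      by (rule sum.cong) (use r sp in \<open>auto simp: algebra_simps\<close>)
    also have "\<dots> = \<alpha> * (real n - 1) * TX + c * (real s * T - TX)"
      by (simp add: TX_def sum.distrib sum_subtractf sum_distrib_left right_diff_distrib)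
    finally show ?thesis .
  qed
  have sY: "(\<Sum>i\<in>{s..<p}. v i) = TP - TX"
  proof -
    have "(\<Sum>i\<in>{s..<p}. v i) = sum v ({..<p} - {..<s})" by (rule arg_cong[where f="sum v"]) auto
    also have "\<dots> = TP - TX" using sp unfolding TP_def TX_def by (subst sum_diff) auto
    finally show ?thesis .
  qed
  have sZ: "(\<Sum>i\<in>{p..<n}. v i) = T - TP"
  proof -
    have "(\<Sum>i\<in>{p..<n}. v i) = sum v ({..<n} - {..<p})" by (rule arg_cong[where f="sum v"]) auto
    also have "\<dots> = T - TP" using sp unfolding TP_def T_def by (subst sum_diff) auto
    finally show ?thesis .
  qed
  have e2: "\<mu> * (TP - TX) = \<alpha> * (real p - 1) * (TP - TX) + c * ((real p - real s) * TP - (TP - TX))"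
  proof -
    have "\<mu> * (TP - TX) = (\<Sum>i\<in>{s..<p}. \<mu> * v i)" unfolding sY[symmetric] by (simp add: sum_distrib_left)
    also have "\<dots> = (\<Sum>i\<in>{s..<p}. \<alpha> * (real p - 1) * v i + c * TP - c * v i)"
      by (rule sum.cong) (use r sp in \<open>auto simp: algebra_simps\<close>)
    also have "\<dots> = \<alpha> * (real p - 1) * (TP - TX) + c * ((real p - real s) * TP - (TP - TX))"
      using sp by (simp add: sY sum.distrib sum_subtractf sum_distrib_left[symmetric] right_diff_distrib of_nat_diff)
    finally show ?thesis .
  qed
  have e3: "\<mu> * (T - TP) = \<alpha> * real s * (T - TP) + c * (real n - real p) * TX"
  proof -
    have "\<mu> * (T - TP) = (\<Sum>i\<in>{p..<n}. \<mu> * v i)" unfolding sZ[symmetric] by (simp add: sum_distrib_left)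
    also have "\<dots> = (\<Sum>i\<in>{p..<n}. \<alpha> * real s * v i + c * TX)"
      by (rule sum.cong) (use r sp in \<open>auto simp: algebra_simps\<close>)
    also have "\<dots> = \<alpha> * real s * (T - TP) + c * (real n - real p) * TX"
      using sp by (simp add: sZ sum.distrib sum_distrib_left[symmetric] of_nat_diff)
    finally show ?thesis .
  qed
  show ?thesis
  proof (cases "TX = 0 \<and> TP = 0 \<and> T = 0")
    case True
    from nz obtain i where i: "i < n" "v i \<noteq> 0" by blast
    have "\<mu> * v i = (if i < s then (\<alpha> * (real n - 1) - c) * v i
      else if i < p then (\<alpha> * (real p - 1) - c) * v i else (\<alpha> * real s) * v i)"
      using r[OF i(1)] True by (simp add: algebra_simps)
    then show ?thesis using i(2) unfolding c_def by (auto split: if_splits)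
  next
    case False
    define X where "X = TX"
    define Y where "Y = TP - TX"
    define Z where "Z = T - TP"
    have nz3: "X \<noteq> 0 \<or> Y \<noteq> 0 \<or> Z \<noteq> 0" using False unfolding X_def Y_def Z_def by auto
    let ?p = "\<mu> - (\<alpha>*(real n-1) + c*(real s-1))"
    let ?q = "\<mu> - (\<alpha>*(real p-1) + c*(real p-real s-1))"
    let ?r = "\<mu> - \<alpha>*real s"
    have E1: "?p * X = (c*real s) * (Y + Z)" using e1 unfolding X_def Y_def Z_def by (simp add: algebra_simps)
    have E2: "?q * Y = (c*(real p - real s)) * X" using e2 unfolding X_def Y_def Z_def by (simp add: algebra_simps)
    have E3: "?r * Z = (c*(real n - real p)) * X" using e3 unfolding X_def Y_def Z_def by (simp add: algebra_simps)
    have ch: "chi \<alpha> (real n) (real s) (real p) \<mu> = ?p*?q*?r - (c*real s)*(c*(real p - real s))*?r - (c*real s)*(c*(real n - real p))*?q"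
      unfolding chi_def c_def by (simp add: power2_eq_square algebra_simps)
    from cubic_kill[OF E1 E2 E3] nz3 have "chi \<alpha> (real n) (real s) (real p) \<mu> = 0"
      unfolding ch by auto
    thus ?thesis by simp
  qed
qed


lemma gorder_G: "gorder (gjoin (complete s) (gunion (complete m) (edgeless t))) = s + (m + t)"
  by (simp add: gjoin_def gunion_def gorder_def complete_def edgeless_def)

lemma gadj_G:
  assumes "i < s + (m + t)" "j < s + (m + t)"
  shows "gadj (gjoin (complete s) (gunion (complete m) (edgeless t))) i j \<longleftrightarrow> Eadj s (s+m) i j"
  using assms by (auto simp: gjoin_def gunion_def gorder_def gadj_def complete_def edgeless_def Eadj_def)

lemma cubic_mono:
  fixes b1 b2 b3 A B L x :: real
  assumes q0: "L > b2" and r0: "L > b3" and A: "A \<ge> 0" and B: "B \<ge> 0"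
    and hL: "(L-b1)*(L-b2)*(L-b3) - A*(L-b3) - B*(L-b2) > 0" and x: "x \<ge> L"
  shows "(x-b1)*(x-b2)*(x-b3) - A*(x-b3) - B*(x-b2) > 0"
proof -
  define p0 q0 r0 where "p0 = L - b1" "q0 = L - b2" "r0 = L - b3"
  define p q r where "p = x - b1" "q = x - b2" "r = x - b3"
  have pos: "q0 > 0" "r0 > 0" "q \<ge> q0" "r \<ge> r0" "p \<ge> p0"
    using q0 r0 x unfolding p0_q0_r0_def p_q_r_def by auto
  have "p0*q0*r0 > A*r0 + B*q0" using hL unfolding p0_q0_r0_def by simp
  hence "p0 > (A*r0 + B*q0)/(q0*r0)" using pos by (simp add: pos_divide_less_eq mult.assoc)
  also have "(A*r0 + B*q0)/(q0*r0) = A/q0 + B/r0" using pos by (simp add: field_simps)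
  finally have 1: "p0 > A/q0 + B/r0" .
  have "A/q \<le> A/q0" using pos A by (intro divide_left_mono) auto
  moreover have "B/r \<le> B/r0" using pos B by (intro divide_left_mono) auto
  ultimately have "p > A/q + B/r" using 1 pos by linarith
  hence "p*(q*r) > (A/q + B/r)*(q*r)" using pos by (intro mult_strict_right_mono) auto
  also have "(A/q + B/r)*(q*r) = A*r + B*q" using pos by (simp add: field_simps)
  finally show ?thesis unfolding p_q_r_def by (simp add: algebra_simps)
qed

lemma f_bound_cons:
  assumes "0 \<le> \<alpha>" "\<alpha> < 1" "N \<ge> f_bound \<alpha>"
  shows "N \<ge> 14 \<and> (1-\<alpha>)*N \<ge> 5"
proof -
  consider "\<alpha> \<le> 1/2" | "1/2 < \<alpha>" "\<alpha> \<le> 2/3" | "2/3 < \<alpha>" "\<alpha> \<le> 3/4" | "3/4 < \<alpha>" by linarith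
  then show ?thesis
  proof cases
    case 1
    hence N: "N \<ge> 14" using assms by (simp add: f_bound_def)
    have "(1/2)*14 \<le> (1-\<alpha>)*N" using 1 N by (intro mult_mono) auto
    thus ?thesis using N by simp
  next
    case 2
    hence N: "N \<ge> 17" using assms by (simp add: f_bound_def)
    have "(1/3)*17 \<le> (1-\<alpha>)*N" using 2 N by (intro mult_mono) auto
    thus ?thesis using N by simp
  next
    case 3
    hence N: "N \<ge> 20" using assms by (simp add: f_bound_def)
    have "(1/4)*20 \<le> (1-\<alpha>)*N" using 3 N by (intro mult_mono) auto
    thus ?thesis using N by simp
  next
    case 4
    hence N: "N \<ge> 5/(1-\<alpha>) + 1" using assms by (simp add: f_bound_def)
    have c: "0 < 1-\<alpha>" "1-\<alpha> < 1/4" using 4 assms by auto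
    have "5/(1-\<alpha>) > 5/(1/4)" using c by (intro divide_strict_left_mono) auto
    hence N14: "N \<ge> 14" using N by simp
    have "(1-\<alpha>)*N \<ge> (1-\<alpha>)*(5/(1-\<alpha>) + 1)" using N c by (intro mult_left_mono) auto
    also have "(1-\<alpha>)*(5/(1-\<alpha>) + 1) = 5 + (1-\<alpha>)" using c by (simp add: field_simps)
    finally show ?thesis using N14 c by simp
  qed
qed


theorem mainTheorem5:
  fixes \<alpha> :: real and n s :: nat
  assumes "0 \<le> \<alpha>" and "\<alpha> < 1"
    and "real n \<ge> f_bound \<alpha>"
    and "2 \<le> s" and "real s \<le> (real n - 1) / 3"
  shows "rho_alpha \<alpha> (gjoin (complete s) (gunion (complete (n - 3*s + 1)) (edgeless (2*s - 1))))
           < eta \<alpha> (real n)"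
proof -
  note a0 = assms(1) and a1 = assms(2) and s2 = assms(4)
  have fb: "real n \<ge> 14 \<and> (1-\<alpha>)*real n \<ge> 5" using f_bound_cons assms(1-3) by blast
  have N14: "real n \<ge> 14" and cN: "(1-\<alpha>)*real n \<ge> 5" using fb by auto
  have hn: "3*s+1 \<le> n"
  proof -
    have "real (3*s+1) \<le> real n" using assms(5) by simp
    thus ?thesis by (simp only: of_nat_le_iff)
  qed
  define m where "m = n - 3*s + 1"
  define t where "t = 2*s - 1"
  define p where "p = s + m"
  define G where "G = gjoin (complete s) (gunion (complete m) (edgeless t))"
  have nsum: "s + (m + t) = n" using hn s2 unfolding m_def t_def by simp
  have ord: "gorder G = n" unfolding G_def gorder_G nsum ..
  have adj: "gadj G i j \<longleftrightarrow> Eadj s p i j" if "i < n" "j < n" for i j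
    unfolding G_def p_def using gadj_G[of i s m t j] that nsum by simp
  have sp: "s \<le> p" "p \<le> n" using nsum unfolding p_def by auto
  have realp: "real p = real n - 2*real s + 1" using hn s2 unfolding p_def m_def by (simp add: of_nat_diff)
  define N S P where "N = real n" "S = real s" "P = real p"
  define L where "L = N - 3"
  define c where "c = 1 - \<alpha>"
  have S2: "S \<ge> 2" using s2 unfolding N_S_P_def by simp
  have N3S: "3*S + 1 \<le> N" using hn unfolding N_S_P_def by linarith
  have Nge: "N \<ge> 14" "c*N \<ge> 5" using N14 cN unfolding N_S_P_def c_def by auto
  have c0: "0 < c" "c \<le> 1" using a0 a1 unfolding c_def by auto
  have aS: "\<alpha> * S \<le> S" "\<alpha> \<le> \<alpha> * S" "0 \<le> \<alpha> * S" using a1 a0 S2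
    by (auto intro: mult_left_le_one_le mult_left_mono[of 1 S \<alpha>, simplified])
  have Sa: "S*\<alpha> \<le> S" using aS(1) by (metis mult.commute)
  have Pd: "P = N - 2*S + 1" using realp unfolding N_S_P_def by simp
  have chiL: "chi \<alpha> N S P L > 0"
  proof -
    define k where "k = N - 3*S - 1"
    have Sc: "S = 2 \<or> S = 3 \<or> S \<ge> 4"
    proof -
      have "s = 2 \<or> s = 3 \<or> s \<ge> 4" using s2 by auto
      thus ?thesis unfolding N_S_P_def by auto
    qed
    have "chi \<alpha> N S P L = c*((2*S-3)*k^2 + (8*S^2-16*S+3)*k + 8*S^3-24*S^2+12*S+6)
             + c^2*(4*S*(S-1)*k + 4*S*(S^2-S-1)) - 2*(2*S-3)*(N-S-3)"
    proof -
      have Nk: "N = k + 3*S + 1" unfolding k_def by simp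
      have al: "\<alpha> = 1 - c" unfolding c_def by simp
      show ?thesis unfolding chi_def L_def Pd by (simp only: Nk al; simp add: power2_eq_square power3_eq_cube algebra_simps)
    qed
    also have "\<dots> > 0" using Qpos[OF c0(1) Sc N3S Nge(1) Nge(2)] unfolding k_def by simp
    finally show ?thesis .
  qed
  have chipos: "chi \<alpha> N S P x > 0" if x: "x \<ge> L" for x
  proof -
    have b2: "L > \<alpha>*(P-1) + (1-\<alpha>)*(P-S-1)" unfolding L_def Pd by (simp add: algebra_simps) (use Sa S2 in linarith)
    have b3: "L > \<alpha>*S" using aS N3S S2 unfolding L_def by linarith
    have A: "(1-\<alpha>)^2*S*(P-S) \<ge> 0" using S2 N3S unfolding Pd by simp
    have B: "(1-\<alpha>)^2*S*(N-P) \<ge> 0" using S2 N3S unfolding Pd by simp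
    show ?thesis using cubic_mono[OF b2 b3 A B _ x] chiL unfolding chi_def by blast
  qed
  define Eig where "Eig = {\<mu>. is_eigenvalue (gorder G) (A_alpha \<alpha> G) \<mu>}"
  define sp1 sp2 sp3 where "sp1 = \<alpha>*(N - 1) - (1-\<alpha>)" "sp2 = \<alpha>*(P - 1) - (1-\<alpha>)" "sp3 = \<alpha> * S"
  have spL: "sp1 < L" "sp2 < L" "sp3 < L"
    using aS Nge c0 N3S unfolding sp1_sp2_sp3_def L_def Pd c_def by (auto simp: algebra_simps)
  have Eig_sub: "Eig \<subseteq> {sp1, sp2, sp3} \<union> {x. chi \<alpha> N S P x = 0}"
  proof
    fix \<mu> assume "\<mu> \<in> Eig"
    then obtain v where nz: "\<exists>i<n. v i \<noteq> 0" and ev: "\<forall>i<n. (\<Sum>j<n. A_alpha \<alpha> G i j * v j) = \<mu> * v i"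
      unfolding Eig_def is_eigenvalue_def ord by blast
    from eig_classify[OF ord adj sp ev nz] show "\<mu> \<in> {sp1, sp2, sp3} \<union> {x. chi \<alpha> N S P x = 0}"
      unfolding sp1_sp2_sp3_def N_S_P_def by auto
  qed
  have Eig_lt: "\<mu> < L" if "\<mu> \<in> Eig" for \<mu>
  proof (rule ccontr)
    assume "\<not> \<mu> < L"
    hence "\<mu> \<ge> L" by simp
    hence "chi \<alpha> N S P \<mu> > 0" by (rule chipos)
    moreover have "\<mu> \<notin> {sp1, sp2, sp3}" using spL \<open>\<mu> \<ge> L\<close> by auto
    ultimately show False using Eig_sub that by auto
  qed
  have Eig_fin: "finite Eig"
  proof -
    define b1 b2 b3 AA BB where "b1 = \<alpha>*(N-1) + (1-\<alpha>)*(S-1)" "b2 = \<alpha>*(P-1) + (1-\<alpha>)*(P-S-1)"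
      "b3 = \<alpha>*S" "AA = (1-\<alpha>)^2*S*(P-S)" "BB = (1-\<alpha>)^2*S*(N-P)"
    define pc where "pc = [:-b1,1:]*[:-b2,1:]*[:-b3,1:] - smult AA [:-b3,1:] - smult BB [:-b2,1:]"
    have pcv: "poly pc x = chi \<alpha> N S P x" for x
      unfolding pc_def chi_def b1_b2_b3_AA_BB_def by (simp add: algebra_simps)
    have "pc \<noteq> 0" using chiL pcv[of L] by auto
    hence "finite {x. poly pc x = 0}" by (rule poly_roots_finite)
    hence "finite {x. chi \<alpha> N S P x = 0}" using pcv by simp
    hence "finite ({sp1, sp2, sp3} \<union> {x. chi \<alpha> N S P x = 0})" by simp
    thus ?thesis using Eig_sub finite_subset by blast
  qed
  have Eig_ne: "sp3 \<in> Eig"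
  proof -
    define v :: "nat \<Rightarrow> real" where "v = (\<lambda>j. (if j = p then 1 else 0) - (if j = p + 1 then 1 else 0))"
    have p1: "p + 1 < n" using nsum s2 unfolding p_def t_def by simp
    have sums: "(\<Sum>j<n. v j) = 0" "(\<Sum>j<p. v j) = 0" "(\<Sum>j<s. v j) = 0"
      using p1 sp unfolding v_def by (simp_all add: sum_subtractf)
    have "\<forall>i<n. (\<Sum>j<n. A_alpha \<alpha> G i j * v j) = sp3 * v i"
    proof (intro allI impI)
      fix i assume i: "i < n"
      have R: "(\<Sum>j<n. A_alpha \<alpha> G i j * v j) = (if i < s then \<alpha>*(real n - 1)*v i + (1-\<alpha>)*((\<Sum>j<n. v j) - v i)
          else if i < p then \<alpha>*(real p - 1)*v i + (1-\<alpha>)*((\<Sum>j<p. v j) - v i)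
          else \<alpha>*real s*v i + (1-\<alpha>)*(\<Sum>j<s. v j))"
        by (rule row_eq[OF ord adj sp i])
      have vz: "v i = 0" if "i < p" using that unfolding v_def by simp
      show "(\<Sum>j<n. A_alpha \<alpha> G i j * v j) = sp3 * v i"
        unfolding R sums sp1_sp2_sp3_def N_S_P_def
        using sp vz by auto
    qed
    moreover have "\<exists>i<n. v i \<noteq> 0" using p1 by (intro exI[of _ p]) (auto simp: v_def)
    ultimately show ?thesis unfolding Eig_def is_eigenvalue_def ord by blast
  qed
  have rho_lt: "rho_alpha \<alpha> G < L"
  proof -
    have "rho_alpha \<alpha> G = Max Eig" unfolding rho_alpha_def Eig_def ..
    moreover have "Max Eig \<in> Eig" using Eig_fin Eig_ne by (intro Max_in) auto
    ultimately show ?thesis using Eig_lt by simp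
  qed
  define k0 where "k0 = (-1) * \<alpha>^2 * N^2 + (5*\<alpha>^2 - 3*\<alpha> + 2) * N - 10*\<alpha>^2 + 15*\<alpha> - 8"
  define k1 where "k1 = \<alpha> * N^2 + (\<alpha>^2 - 2*\<alpha> - 1) * N - 2*\<alpha> + 1"
  define k2 where "k2 = - ((\<alpha> + 1) * N + \<alpha> - 4)"
  define q where "q = [:k0, k1, k2, 1:]"
  have qv: "poly q x = eta_poly \<alpha> N x" for x
    unfolding q_def eta_poly_def k0_def k1_def k2_def by (simp add: power2_eq_square power3_eq_cube algebra_simps)
  have qL: "poly q L < 0"
  proof -
    have "poly q L = -2*(1-\<alpha>)*(\<alpha>*(N-5)+1)"
      unfolding qv eta_poly_def L_def by (simp add: power2_eq_square power3_eq_cube algebra_simps)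
    moreover have "\<alpha>*(N-5) \<ge> 0" using a0 Nge by simp
    moreover have "(-2*(1-\<alpha>))*(\<alpha>*(N-5)+1) < 0"
      by (rule mult_neg_pos) (use a1 \<open>\<alpha>*(N-5) \<ge> 0\<close> in auto)
    ultimately show ?thesis by simp
  qed
  have qN: "poly q N > 0"
  proof -
    have "poly q N = 3*N^2*c + 5*c^2*(N-2) - 5*c*(N-1) + 3*(N-1)"
      unfolding qv eta_poly_def c_def by (simp add: power2_eq_square power3_eq_cube algebra_simps)
    moreover have "3*N^2*c - 5*c*(N-1) > 0"
    proof -
      have h14: "14*N \<le> N*N" using Nge by (intro mult_right_mono) auto
      have "3*N^2 - 5*(N-1) > 0" unfolding power2_eq_square using h14 Nge by (smt (verit))
      hence "c * (3*N^2 - 5*(N-1)) > 0" using c0 by simp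
      thus ?thesis by (simp add: algebra_simps)
    qed
    moreover have "5*c^2*(N-2) \<ge> 0" using Nge by simp
    ultimately show ?thesis using Nge by (smt (verit))
  qed
  obtain r where r: "L < r" "poly q r = 0" using poly_IVT_pos[OF _ qL qN] unfolding L_def by auto
  have "q \<noteq> 0" using qL by auto
  hence fin: "finite {x. eta_poly \<alpha> N x = 0}" using poly_roots_finite[of q] qv by simp
  have "r \<le> eta \<alpha> N" unfolding eta_def using fin r(2) qv by (intro Max_ge) auto
  hence "L < eta \<alpha> N" using r(1) by simp
  thus ?thesis using rho_lt unfolding G_def m_def t_def N_S_P_def by simp
qed

end
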